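(* Consider $n$ buyers and $m$ datasets, where buyer $i$ has budget $b_i\in\mathbb{R}_{\ge0}$ and linear valuation $v_i(\mathbf{x})=\sum_j\tau_{i,j}x_j$ with $\tau_{i,j}\ge0$. For a price vector $\mathbf{p}\in\mathbb{R}_{\ge0}^m$, consider the linear pricing function $\mathbf{x}\mapsto\mathbf{p}^\top\mathbf{x}$ and let $r_i(\mathbf{p})=r(\mathbf{p}^\top\cdot\mid v_i,b_i)$. Then $$r_i(\mathbf{p})=\min\Big(b_i,\sum_{j\in[m]:\,\tau_{i,j}\ge p_j}p_j\Big).$$ Moreover, there exists a price vector $\hat{\mathbf{p}}\in\mathbb{R}^m_{\ge0}$ with $r_i(\hat{\mathbf{p}})\ge r_i(\mathbf{p})$ for every buyer $i$ and $\hat p_j\in\{\tau_{i,j}:i\in[n]\}$ for every dataset $j$.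
   Context: For a pricing function $\mathbf{q}:[0,1]^m\to\mathbb{R}_{\ge0}$ (monotone, $\mathbf{q}(\mathbf{0})=0$), valuation $v$ and budget $b$: $F(\mathbf{q}\mid b)=\{\mathbf{x}\in[0,1]^m:\mathbf{q}(\mathbf{x})\le b\}$, $u^*=\sup_{\mathbf{x}\in F}(v(\mathbf{x})-\mathbf{q}(\mathbf{x}))$, $\mathrm{Dem}(\mathbf{q}\mid v,b)=\{\mathbf{x}\in F:v(\mathbf{x})-\mathbf{q}(\mathbf{x})=u^*\}$, and revenue $r(\mathbf{q}\mid v,b)=\sup_{\mathbf{x}\in\mathrm{Dem}}\mathbf{q}(\mathbf{x})$. *)

theory Defs
  imports "HOL-Analysis.Analysis"
begin

text \<open>Bundles of datasets are vectors x in [0,1]^m, represented as functions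
  from a finite index type 'j of datasets to the reals.\<close>

definition cube :: "('j \<Rightarrow> real) set" where
  "cube = {x. \<forall>j. 0 \<le> x j \<and> x j \<le> 1}"

definition feasible :: "(('j \<Rightarrow> real) \<Rightarrow> real) \<Rightarrow> real \<Rightarrow> ('j \<Rightarrow> real) set" where
  "feasible q b = {x \<in> cube. q x \<le> b}"

definition opt_utility :: "(('j \<Rightarrow> real) \<Rightarrow> real) \<Rightarrow> (('j \<Rightarrow> real) \<Rightarrow> real) \<Rightarrow> real \<Rightarrow> real" where
  "opt_utility q v b = (SUP x\<in>feasible q b. v x - q x)"

definition demand :: "(('j \<Rightarrow> real) \<Rightarrow> real) \<Rightarrow> (('j \<Rightarrow> real) \<Rightarrow> real) \<Rightarrow> real \<Rightarrow> ('j \<Rightarrow> real) set" where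
  "demand q v b = {x \<in> feasible q b. v x - q x = opt_utility q v b}"

definition revenue :: "(('j \<Rightarrow> real) \<Rightarrow> real) \<Rightarrow> (('j \<Rightarrow> real) \<Rightarrow> real) \<Rightarrow> real \<Rightarrow> real" where
  "revenue q v b = (SUP x\<in>demand q v b. q x)"

definition linear_price :: "('j::finite \<Rightarrow> real) \<Rightarrow> ('j \<Rightarrow> real) \<Rightarrow> real" where
  "linear_price p x = (\<Sum>j\<in>UNIV. p j * x j)"

end

theory Submission
  imports Defs
begin

lemma cube_compact: "compact (cube :: ('j::finite \<Rightarrow> real) set)"
proof -
  have "cube = PiE UNIV (\<lambda>_::'j. {0..1::real})"
    by (auto simp: cube_def PiE_def Pi_def extensional_def)
  moreover have "compactin (product_topology (\<lambda>_. euclidean) UNIV) (PiE UNIV (\<lambda>_::'j. {0..1::real}))"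
    by (simp add: compactin_PiE)
  ultimately show ?thesis by (simp add: euclidean_product_topology)
qed

lemma cont_lp: "continuous_on S (linear_price (p::'j::finite \<Rightarrow> real))"
proof -
  have "continuous_on UNIV (linear_price p)"
    unfolding linear_price_def
    by (intro continuous_intros continuous_on_mult continuous_on_sum) auto
  then show ?thesis using continuous_on_subset by blast
qed

lemma lp_upd: "linear_price (p::'j::finite \<Rightarrow> real) (x(j:=c)) = linear_price p x + p j * (c - x j)"
proof -
  have "(\<Sum>k\<in>UNIV. p k * (x(j:=c)) k) = (\<Sum>k\<in>UNIV. p k * x k + (if k = j then p j * (c - x j) else 0))"
    by (rule sum.cong) (auto simp: algebra_simps)
  then show ?thesis unfolding linear_price_def by (simp add: sum.distrib)
qed

lemma revenue_linear:
  fixes p t :: "'j::finite \<Rightarrow> real" and b :: real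
  assumes p0: "\<forall>j. 0 \<le> p j" and t0: "\<forall>j. 0 \<le> t j" and b0: "0 \<le> b"
  shows "revenue (linear_price p) (linear_price t) b = min b (\<Sum>j\<in>{j. p j \<le> t j}. p j)"
proof -
  define P where "P = linear_price p"
  define U where "U = (\<lambda>x. linear_price t x - P x)"
  define F where "F = feasible P b"
  define T where "T = (\<Sum>j\<in>{j. p j \<le> t j}. p j)"
  have contP: "continuous_on S P" for S unfolding P_def by (rule cont_lp)
  have contU: "continuous_on S U" for S unfolding U_def by (intro continuous_intros cont_lp contP)
  have F_eq: "F = cube \<inter> {x. P x \<le> b}" unfolding F_def feasible_def by auto
  have cF: "compact F" unfolding F_eq
    by (intro compact_Int_closed cube_compact closed_Collect_le contP continuous_on_const)
  have zF: "(\<lambda>_. 0) \<in> F" using b0 unfolding F_eq cube_def P_def linear_price_def by auto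
  obtain x0 where x0: "x0 \<in> F" "\<forall>y\<in>F. U y \<le> U x0"
    using continuous_attains_sup[OF cF _ contU] zF by blast
  have ou: "opt_utility P (linear_price t) b = U x0"
    unfolding opt_utility_def F_def[symmetric] U_def[symmetric]
    by (rule cSup_eq_maximum) (use x0 in auto)
  define D where "D = demand P (linear_price t) b"
  have D_eq: "D = F \<inter> {x. U x = U x0}" unfolding D_def demand_def ou F_def[symmetric] U_def by auto
  have cD: "compact D" unfolding D_eq
    by (intro compact_Int_closed cF closed_Collect_eq contU continuous_on_const)
  obtain x1 where x1: "x1 \<in> D" "\<forall>y\<in>D. P y \<le> P x1"
    using continuous_attains_sup[OF cD _ contP] x0 D_eq by blast
  have rev: "revenue P (linear_price t) b = P x1"
    unfolding revenue_def D_def[symmetric]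
    by (rule cSup_eq_maximum) (use x1 in auto)
  have x1F: "x1 \<in> F" and Ux1: "U x1 = U x0" using x1 D_eq by auto
  have x1c: "0 \<le> x1 j" "x1 j \<le> 1" for j using x1F unfolding F_eq cube_def by auto
  have Pb: "P x1 \<le> b" using x1F F_eq by auto
  have off: "p j * x1 j = 0" if "\<not> p j \<le> t j" for j
  proof (rule ccontr)
    assume ne: "p j * x1 j \<noteq> 0"
    then have xp: "x1 j > 0" using x1c[of j] by (cases "x1 j = 0") auto
    define y where "y = x1(j := 0)"
    have Py: "P y = P x1 - p j * x1 j" unfolding y_def P_def by (simp add: lp_upd)
    have Uy: "U y = U x1 + (p j - t j) * x1 j" unfolding U_def y_def P_def
      by (simp add: lp_upd algebra_simps)
    have "0 \<le> p j * x1 j" using p0 x1c[of j] by simp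
    then have "P y \<le> b" using Py Pb by linarith
    moreover have "y \<in> cube" unfolding cube_def y_def using x1c by auto
    ultimately have "y \<in> F" unfolding F_eq by auto
    moreover have "U y > U x0" using Uy Ux1 that xp by (simp add: mult_pos_pos)
    ultimately show False using x0 by fastforce
  qed
  have PT: "P x1 = (\<Sum>j\<in>{j. p j \<le> t j}. p j * x1 j)"
  proof -
    have "P x1 = (\<Sum>j\<in>{j. p j \<le> t j}. p j * x1 j) + (\<Sum>j\<in>-{j. p j \<le> t j}. p j * x1 j)"
      unfolding P_def linear_price_def
      using sum.subset_diff[of "{j. p j \<le> t j}" UNIV "\<lambda>j. p j * x1 j"] by (simp add: Compl_eq_Diff_UNIV)
    also have "(\<Sum>j\<in>-{j. p j \<le> t j}. p j * x1 j) = 0" by (rule sum.neutral) (use off in auto)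
    finally show ?thesis by simp
  qed
  have up: "P x1 \<le> T" unfolding PT T_def
    by (rule sum_mono) (use x1c p0 in \<open>simp add: mult_left_le\<close>)
  have low: "P x1 \<ge> min b T"
  proof (rule ccontr)
    assume "\<not> P x1 \<ge> min b T"
    then have lt: "P x1 < b" "P x1 < T" by auto
    have "\<exists>j. p j \<le> t j \<and> p j * x1 j < p j"
    proof (rule ccontr)
      assume "\<not> ?thesis"
      then have "\<forall>j\<in>{j. p j \<le> t j}. p j \<le> p j * x1 j" by auto
      then have "T \<le> P x1" unfolding PT T_def by (intro sum_mono) auto
      then show False using lt by simp
    qed
    then obtain j where j: "p j \<le> t j" "p j * x1 j < p j" by blast
    have pj: "p j > 0"
    proof -
      have "p j \<noteq> 0" using j by auto
      then show ?thesis using p0 by (simp add: order_less_le)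
    qed
    have xj: "x1 j < 1"
    proof (rule ccontr)
      assume "\<not> x1 j < 1"
      then have "p j * 1 \<le> p j * x1 j" using pj by (intro mult_left_mono) auto
      then show False using j by simp
    qed
    define d where "d = min (1 - x1 j) ((b - P x1) / p j)"
    have d0: "d > 0" unfolding d_def using pj xj lt by auto
    have d1: "d \<le> 1 - x1 j" and d2: "p j * d \<le> b - P x1" unfolding d_def using pj
      by (auto simp: min_def field_simps)
    define y where "y = x1(j := x1 j + d)"
    have Py: "P y = P x1 + p j * d" unfolding y_def P_def by (simp add: lp_upd)
    have Uy: "U y = U x1 + (t j - p j) * d" unfolding U_def y_def P_def
      by (simp add: lp_upd algebra_simps)
    have yF: "y \<in> F" unfolding F_eq cube_def using x1c d0 d1 d2 Py
      by (auto simp: y_def)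
    have "U y \<ge> U x0" using Uy Ux1 j d0 by simp
    then have "U y = U x0" using x0 yF by fastforce
    then have "y \<in> D" using yF D_eq by auto
    then have "P y \<le> P x1" using x1 by auto
    then show False using Py mult_pos_pos[OF pj d0] by simp
  qed
  show ?thesis using rev up low Pb unfolding P_def T_def by linarith
qed

theorem mainTheorem4:
  fixes \<tau> :: "'i::finite \<Rightarrow> 'j::finite \<Rightarrow> real"
    and b :: "'i \<Rightarrow> real"
    and p :: "'j \<Rightarrow> real"
  assumes tau_nonneg: "\<forall>i j. 0 \<le> \<tau> i j"
    and b_nonneg: "\<forall>i. 0 \<le> b i"
    and p_nonneg: "\<forall>j. 0 \<le> p j"
  shows "(\<forall>i. revenue (linear_price p) (linear_price (\<tau> i)) (b i)
              = min (b i) (\<Sum>j\<in>{j. p j \<le> \<tau> i j}. p j))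
       \<and> (\<exists>ph :: 'j \<Rightarrow> real.
            (\<forall>j. 0 \<le> ph j)
          \<and> (\<forall>i. revenue (linear_price ph) (linear_price (\<tau> i)) (b i)
                 \<ge> revenue (linear_price p) (linear_price (\<tau> i)) (b i))
          \<and> (\<forall>j. ph j \<in> {\<tau> i j | i. True}))"
proof -
  let ?S = "\<lambda>j. {\<tau> i j | i. p j \<le> \<tau> i j}"
  define ph where "ph j = (if \<exists>i. p j \<le> \<tau> i j then Min (?S j) else \<tau> undefined j)" for j
  have finS: "finite (?S j)" for j
  proof -
    have "?S j \<subseteq> range (\<lambda>i. \<tau> i j)" by auto
    moreover have "finite (range (\<lambda>i. \<tau> i j))" by simp
    ultimately show ?thesis by (rule finite_subset)
  qed
  have ph_props: "p j \<le> ph j \<and> ph j \<le> \<tau> i j" if "p j \<le> \<tau> i j" for i j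
  proof -
    have ne: "?S j \<noteq> {}" using that by auto
    have ph: "ph j = Min (?S j)" using that unfolding ph_def by auto
    have "Min (?S j) \<in> ?S j" using Min_in[OF finS ne] .
    then have "p j \<le> Min (?S j)" by auto
    moreover have "Min (?S j) \<le> \<tau> i j" using Min_le[OF finS] that by blast
    ultimately show ?thesis using ph by simp
  qed
  have ph_in: "ph j \<in> {\<tau> i j | i. True}" for j
  proof (cases "\<exists>i. p j \<le> \<tau> i j")
    case True
    then have ne: "?S j \<noteq> {}" by auto
    have "Min (?S j) \<in> ?S j" using Min_in[OF finS ne] .
    then show ?thesis using True unfolding ph_def by auto
  next
    case False
    then show ?thesis unfolding ph_def by auto
  qed
  have ph0: "0 \<le> ph j" for j using ph_in[of j] tau_nonneg by auto
  have R: "revenue (linear_price q) (linear_price (\<tau> i)) (b i) = min (b i) (\<Sum>j\<in>{j. q j \<le> \<tau> i j}. q j)"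
    if "\<forall>j. 0 \<le> q j" for q i
    using revenue_linear[of q "\<tau> i" "b i"] that tau_nonneg b_nonneg by auto
  have mono: "(\<Sum>j\<in>{j. p j \<le> \<tau> i j}. p j) \<le> (\<Sum>j\<in>{j. ph j \<le> \<tau> i j}. ph j)" for i
  proof -
    have "(\<Sum>j\<in>{j. p j \<le> \<tau> i j}. p j) \<le> (\<Sum>j\<in>{j. p j \<le> \<tau> i j}. ph j)"
      using ph_props by (intro sum_mono) auto
    also have "\<dots> \<le> (\<Sum>j\<in>{j. ph j \<le> \<tau> i j}. ph j)"
      using ph_props ph0 by (intro sum_mono2) auto
    finally show ?thesis .
  qed
  show ?thesis
  proof (intro conjI allI exI[of _ ph])
    fix i
    show "revenue (linear_price p) (linear_price (\<tau> i)) (b i) = min (b i) (\<Sum>j\<in>{j. p j \<le> \<tau> i j}. p j)"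
      using R p_nonneg by blast
    show "revenue (linear_price ph) (linear_price (\<tau> i)) (b i) \<ge> revenue (linear_price p) (linear_price (\<tau> i)) (b i)"
      using R[of p i] R[of ph i] p_nonneg ph0 mono[of i] by auto
  next
    show "\<And>j. 0 \<le> ph j" by (rule ph0)
    show "\<And>j. ph j \<in> {\<tau> i j | i. True}" by (rule ph_in)
  qed
qed

end
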